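(* Let $\Theta\sim U[0,1]$ and let $T^{3,2,\Theta}$ be the random policy with $T^{3,2,\Theta}_i=\mathcal{R}_{3,2,\Theta}(T_i^* )$ for $i\in[n]$. Then $T^{3,2,\Theta}$ is resource-feasible with probability 1 and $\mathbb{E}_\Theta[F(T^{3,2,\Theta})]\le\frac{2(\sqrt3-1)}{\ln 3}\cdot\mathrm{OPT}(P)$.
   Context: An instance consists of integers $n\ge 1$, $D\ge 1$; a joint ordering cost $K_0>0$; for each commodity $i\in[n]$ an ordering cost $K_i>0$ and a holding coefficient $H_i>0$; and resource coefficients $\alpha_{id}\ge 0$. A policy is $T=(T_1,\dots,T_n)\in\mathbb{R}_{>0}^n$; it is resource-feasible if $\sum_{i}\alpha_{id}/T_i\le 1$ for every $d\in[D]$. For $g>0$, $\Delta\ge 0$, $\mathcal{M}_{g,\Delta}=\{0,g,\dots,\lfloor\Delta/g\rfloor g\}$; $N(T,\Delta)=|\bigcup_{i}\mathcal{M}_{T_i,\Delta}|$; $J(T)=K_0\limsup_{\Delta\to\infty}N(T,\Delta)/\Delta$; $F(T)=J(T)+\sum_i(K_i/T_i+H_iT_i)$. The convex relaxation (P) is: minimize $K_0/T_{\min}+\sum_{i\in[n]}(K_i/T_i+H_iT_i)$ over $(T_{\min},T_1,\dots,T_n)$ subject to $T_i\ge T_{\min}\ge0$ for all $i$ and $\sum_i\alpha_{id}/T_i\le1$ for all $d$. $\mathrm{OPT}(P)$ is its optimal value and $T^*=(T^*_{\min},T^*_1,\dots,T^*_n)$ is a fixed optimal solution (with $T^*_{\min}>0$).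 For integers $m\ge2$, $k\ge1$ and $\theta\in[0,1]$: $\mathcal{G}_{m,k,\theta}=\{m^{(p+\theta)/k}T^*_{\min}:p\in\mathbb{Z}\}$ and $\mathcal{R}_{m,k,\theta}(t)=\min\{g\in\mathcal{G}_{m,k,\theta}:g>t\}$ for $t>0$. *)

theory Defs
  imports "HOL-Analysis.Analysis"
begin

text \<open>Commodities are indexed by i < n, resources by d < D.
  A policy is a function T :: nat \<Rightarrow> real; only its values at i < n matter.\<close>

definition resource_feasible :: "nat \<Rightarrow> nat \<Rightarrow> (nat \<Rightarrow> nat \<Rightarrow> real) \<Rightarrow> (nat \<Rightarrow> real) \<Rightarrow> bool" where
  "resource_feasible n D \<alpha> T \<longleftrightarrow> (\<forall>d<D. (\<Sum>i<n. \<alpha> i d / T i) \<le> 1)"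

definition mult_set :: "real \<Rightarrow> real \<Rightarrow> real set" where
  "mult_set g \<Delta> = (\<lambda>k::nat. real k * g) ` {0..nat \<lfloor>\<Delta> / g\<rfloor>}"

definition Ncount :: "nat \<Rightarrow> (nat \<Rightarrow> real) \<Rightarrow> real \<Rightarrow> nat" where
  "Ncount n T \<Delta> = card (\<Union>i\<in>{..<n}. mult_set (T i) \<Delta>)"

definition Jcost :: "nat \<Rightarrow> real \<Rightarrow> (nat \<Rightarrow> real) \<Rightarrow> ereal" where
  "Jcost n K0 T = ereal K0 * Limsup at_top (\<lambda>\<Delta>::real. ereal (real (Ncount n T \<Delta>) / \<Delta>))"

definition Fcost :: "nat \<Rightarrow> real \<Rightarrow> (nat \<Rightarrow> real) \<Rightarrow> (nat \<Rightarrow> real) \<Rightarrow> (nat \<Rightarrow> real) \<Rightarrow> ereal" where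
  "Fcost n K0 K H T = Jcost n K0 T + ereal (\<Sum>i<n. K i / T i + H i * T i)"

text \<open>Convex relaxation (P). Since the objective contains K0/Tmin with K0 > 0 (and K_i/T_i),
  points with Tmin = 0 have infinite objective; we restrict to Tmin > 0 (which forces T_i > 0).\<close>
definition P_obj :: "nat \<Rightarrow> real \<Rightarrow> (nat \<Rightarrow> real) \<Rightarrow> (nat \<Rightarrow> real) \<Rightarrow> real \<Rightarrow> (nat \<Rightarrow> real) \<Rightarrow> real" where
  "P_obj n K0 K H Tmin T = K0 / Tmin + (\<Sum>i<n. K i / T i + H i * T i)"

definition P_feasible :: "nat \<Rightarrow> nat \<Rightarrow> (nat \<Rightarrow> nat \<Rightarrow> real) \<Rightarrow> real \<Rightarrow> (nat \<Rightarrow> real) \<Rightarrow> bool" where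
  "P_feasible n D \<alpha> Tmin T \<longleftrightarrow> 0 < Tmin \<and> (\<forall>i<n. Tmin \<le> T i) \<and> resource_feasible n D \<alpha> T"

definition OPT_P :: "nat \<Rightarrow> nat \<Rightarrow> real \<Rightarrow> (nat \<Rightarrow> real) \<Rightarrow> (nat \<Rightarrow> real) \<Rightarrow> (nat \<Rightarrow> nat \<Rightarrow> real) \<Rightarrow> real" where
  "OPT_P n D K0 K H \<alpha> = Inf {P_obj n K0 K H Tmin T | Tmin T. P_feasible n D \<alpha> Tmin T}"

definition P_optimal :: "nat \<Rightarrow> nat \<Rightarrow> real \<Rightarrow> (nat \<Rightarrow> real) \<Rightarrow> (nat \<Rightarrow> real) \<Rightarrow> (nat \<Rightarrow> nat \<Rightarrow> real) \<Rightarrow> real \<Rightarrow> (nat \<Rightarrow> real) \<Rightarrow> bool" where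
  "P_optimal n D K0 K H \<alpha> Tmin T \<longleftrightarrow> P_feasible n D \<alpha> Tmin T \<and>
     (\<forall>Tmin' T'. P_feasible n D \<alpha> Tmin' T' \<longrightarrow> P_obj n K0 K H Tmin T \<le> P_obj n K0 K H Tmin' T')"

definition grid :: "nat \<Rightarrow> nat \<Rightarrow> real \<Rightarrow> real \<Rightarrow> real set" where
  "grid m k \<theta> Tmin = {real m powr ((real_of_int p + \<theta>) / real k) * Tmin | p::int. True}"

definition round_up :: "nat \<Rightarrow> nat \<Rightarrow> real \<Rightarrow> real \<Rightarrow> real \<Rightarrow> real" where
  "round_up m k \<theta> Tmin t = (LEAST g. g \<in> grid m k \<theta> Tmin \<and> g > t)"

end

theory Submission imports Defs begin

lemma grid3_eq: "grid 3 2 \<theta> Tm = {exp (ln 3 / 2 * (of_int p + \<theta>)) * Tm | p::int. True}"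
  unfolding grid_def by (simp add: powr_def algebra_simps)

lemma round_up_eq:
  fixes Tm t \<theta> :: real
  assumes "Tm > 0" "t > 0"
  shows "round_up 3 2 \<theta> Tm t = exp (ln 3 / 2 * (of_int (\<lfloor>ln (t/Tm)/(ln 3 / 2) - \<theta>\<rfloor> + 1) + \<theta>)) * Tm"
proof -
  define L :: real where "L = ln 3 / 2"
  have L: "L > 0" unfolding L_def by simp
  define c where "c = ln (t/Tm) / L"
  have tc: "t = exp (L * c) * Tm" using assms L unfolding c_def by simp
  define p0 where "p0 = \<lfloor>c - \<theta>\<rfloor> + 1"
  have key: "exp (L * (of_int p + \<theta>)) * Tm > t \<longleftrightarrow> p \<ge> p0" for p
  proof -
    have "exp (L * (of_int p + \<theta>)) * Tm > t \<longleftrightarrow> exp (L * (of_int p + \<theta>)) > exp (L * c)"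
      using tc assms by auto
    also have "\<dots> \<longleftrightarrow> L * (of_int p + \<theta>) > L * c" by simp
    also have "\<dots> \<longleftrightarrow> of_int p + \<theta> > c" using L by simp
    also have "\<dots> \<longleftrightarrow> p \<ge> p0" unfolding p0_def by linarith
    finally show ?thesis .
  qed
  show ?thesis
    unfolding round_up_def grid3_eq L_def[symmetric] c_def[symmetric] p0_def[symmetric]
  proof (rule Least_equality)
    show "exp (L * (of_int p0 + \<theta>)) * Tm \<in> {exp (L * (of_int p + \<theta>)) * Tm |p. True} \<and> t < exp (L * (of_int p0 + \<theta>)) * Tm"
      using key by auto
    fix y assume "y \<in> {exp (L * (of_int p + \<theta>)) * Tm |p. True} \<and> t < y"
    then obtain p where y: "y = exp (L * (of_int p + \<theta>)) * Tm" and "t < y" by auto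
    then have "p \<ge> p0" using key by auto
    then show "exp (L * (of_int p0 + \<theta>)) * Tm \<le> y" unfolding y using L assms by (simp add: mult_left_mono)
  qed
qed


lemma mult_set_sub:
  assumes a: "a > 0" and N: "N > (0::nat)"
  shows "mult_set (a * real N) \<Delta> \<subseteq> mult_set a \<Delta>"
proof
  fix x assume "x \<in> mult_set (a * real N) \<Delta>"
  then obtain j :: nat where j: "j \<le> nat \<lfloor>\<Delta> / (a * real N)\<rfloor>" and x: "x = real j * (a * real N)"
    unfolding mult_set_def by auto
  show "x \<in> mult_set a \<Delta>"
  proof (cases "j = 0")
    case True then show ?thesis using x unfolding mult_set_def by (auto intro!: image_eqI[of _ _ 0])
  next
    case False
    then have "real j \<le> \<Delta> / (a * real N)" using j by linarith
    then have "real j * (a * real N) \<le> \<Delta>" using a N by (simp add: field_simps)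
    then have "real (j * N) \<le> \<Delta> / a" using a by (simp add: field_simps)
    then have "j * N \<le> nat \<lfloor>\<Delta> / a\<rfloor>" by linarith
    then show ?thesis using x unfolding mult_set_def by (auto intro!: image_eqI[of _ _ "j*N"])
  qed
qed

lemma finite_mult_set: "finite (mult_set a \<Delta>)" unfolding mult_set_def by simp

lemma card_mult_set:
  assumes "a > 0" "\<Delta> \<ge> 0"
  shows "real (card (mult_set a \<Delta>)) \<le> \<Delta> / a + 1"
proof -
  have "card (mult_set a \<Delta>) \<le> card {0..nat \<lfloor>\<Delta> / a\<rfloor>}" unfolding mult_set_def by (rule card_image_le) simp
  also have "\<dots> = nat \<lfloor>\<Delta> / a\<rfloor> + 1" by simp
  finally have "real (card (mult_set a \<Delta>)) \<le> real (nat \<lfloor>\<Delta> / a\<rfloor>) + 1" by linarith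
  also have "\<dots> \<le> \<Delta> / a + 1" using assms by (simp add: divide_nonneg_nonneg)
  finally show ?thesis .
qed

lemma J_bound:
  assumes K0: "K0 \<ge> 0" and a: "a > 0" and b: "b > 0"
    and T: "\<And>i. i < n \<Longrightarrow> (\<exists>N::nat. N > 0 \<and> T i = a * real N) \<or> (\<exists>N::nat. N > 0 \<and> T i = b * real N)"
  shows "Jcost n K0 T \<le> ereal (K0 * (1/a + 1/b))"
proof -
  have sub: "(\<Union>i\<in>{..<n}. mult_set (T i) \<Delta>) \<subseteq> mult_set a \<Delta> \<union> mult_set b \<Delta>" for \<Delta>
  proof (rule UN_least)
    fix i assume "i \<in> {..<n}"
    then show "mult_set (T i) \<Delta> \<subseteq> mult_set a \<Delta> \<union> mult_set b \<Delta>"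
    proof -
      from T[of i] \<open>i \<in> {..<n}\<close> have "(\<exists>N::nat. N > 0 \<and> T i = a * real N) \<or> (\<exists>N::nat. N > 0 \<and> T i = b * real N)" by simp
      then show ?thesis
    proof (elim disjE exE conjE)
      fix N :: nat assume "N > 0" "T i = a * real N"
      then show ?thesis using mult_set_sub[OF a, of N \<Delta>] by auto
    next
      fix N :: nat assume "N > 0" "T i = b * real N"
      then show ?thesis using mult_set_sub[OF b, of N \<Delta>] by auto
    qed
    qed
  qed
  have bound: "real (Ncount n T \<Delta>) / \<Delta> \<le> (1/a + 1/b) + 2 / \<Delta>" if "\<Delta> > 0" for \<Delta>
  proof -
    have "Ncount n T \<Delta> \<le> card (mult_set a \<Delta> \<union> mult_set b \<Delta>)"
      unfolding Ncount_def by (rule card_mono) (use sub finite_mult_set in auto)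
    also have "\<dots> \<le> card (mult_set a \<Delta>) + card (mult_set b \<Delta>)" by (rule card_Un_le)
    finally have "real (Ncount n T \<Delta>) \<le> real (card (mult_set a \<Delta>)) + real (card (mult_set b \<Delta>))" by linarith
    also have "\<dots> \<le> (\<Delta> / a + 1) + (\<Delta> / b + 1)" using card_mult_set[OF a] card_mult_set[OF b] that by (meson add_mono less_imp_le)
    finally have "real (Ncount n T \<Delta>) / \<Delta> \<le> ((\<Delta> / a + 1) + (\<Delta> / b + 1)) / \<Delta>"
      using that by (simp add: divide_right_mono)
    also have "\<dots> = (1/a + 1/b) + 2 / \<Delta>" using that by (simp add: field_simps)
    finally show ?thesis .
  qed
  have ev: "eventually (\<lambda>\<Delta>. ereal (real (Ncount n T \<Delta>) / \<Delta>) \<le> ereal ((1/a + 1/b) + 2 / \<Delta>)) at_top"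
    using eventually_gt_at_top[of "0::real"] by eventually_elim (use bound in auto)
  have lim: "((\<lambda>\<Delta>::real. ereal ((1/a + 1/b) + 2 / \<Delta>)) \<longlongrightarrow> ereal ((1/a + 1/b) + 0)) at_top"
    by (intro tendsto_ereal tendsto_add tendsto_const tendsto_divide_0[OF tendsto_const] filterlim_at_top_imp_at_infinity filterlim_ident)
  have "Limsup at_top (\<lambda>\<Delta>::real. ereal (real (Ncount n T \<Delta>) / \<Delta>)) \<le> Limsup at_top (\<lambda>\<Delta>::real. ereal ((1/a + 1/b) + 2 / \<Delta>))"
    by (rule Limsup_mono[OF ev])
  also have "\<dots> = ereal (1/a + 1/b)" using lim_imp_Limsup[OF trivial_limit_at_top_linorder lim] by simp
  finally have "Limsup at_top (\<lambda>\<Delta>::real. ereal (real (Ncount n T \<Delta>) / \<Delta>)) \<le> ereal (1/a + 1/b)" .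
  then have "ereal K0 * Limsup at_top (\<lambda>\<Delta>::real. ereal (real (Ncount n T \<Delta>) / \<Delta>)) \<le> ereal K0 * ereal (1/a + 1/b)"
    by (rule ereal_mult_left_mono) (use K0 in simp)
  then show ?thesis unfolding Jcost_def by simp
qed


lemma exp_has_integral:
  fixes L a b :: real
  assumes "L \<noteq> 0" "a \<le> b"
  shows "((\<lambda>x. exp (L*x)) has_integral (exp (L*b) - exp (L*a)) / L) {a..b}"
proof -
  have "((\<lambda>x. exp (L*x) / L) has_vector_derivative exp (L*x)) (at x within {a..b})" for x
  proof -
    have "((\<lambda>x. exp (L*x) / L) has_real_derivative exp (L*x)) (at x within {a..b})"
      by (auto intro!: derivative_eq_intros simp: assms)
    then show ?thesis by (simp add: has_real_derivative_iff_has_vector_derivative)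
  qed
  from fundamental_theorem_of_calculus[OF assms(2), of "\<lambda>x. exp (L*x) / L", OF this] show ?thesis
    by (simp add: diff_divide_distrib)
qed

lemma piece_has_integral:
  fixes L A f :: real
  assumes L: "L \<noteq> 0" and f: "0 \<le> f" "f \<le> 1"
  shows "((\<lambda>x. if x \<le> f then A * exp (L * (1 + x)) else A * exp (L * x)) has_integral
           A * exp (L * f) * (exp L - 1) / L) {0..1}"
proof -
  have i1: "((\<lambda>x. A * exp L * exp (L*x)) has_integral A * exp L * ((exp (L*f) - exp (L*0)) / L)) {0..f}"
    by (rule has_integral_mult_right, rule exp_has_integral) (use L f in auto)
  have i1': "((\<lambda>x. if x \<le> f then A * exp (L * (1 + x)) else A * exp (L * x)) has_integral A * exp L * ((exp (L*f) - exp (L*0)) / L)) {0..f}"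
    by (rule has_integral_spike_finite[where S="{}", OF _ _ i1]) (auto simp: distrib_left exp_add)
  have i2: "((\<lambda>x. A * exp (L*x)) has_integral A * ((exp (L*1) - exp (L*f)) / L)) {f..1}"
    by (rule has_integral_mult_right, rule exp_has_integral) (use L f in auto)
  have i2': "((\<lambda>x. if x \<le> f then A * exp (L * (1 + x)) else A * exp (L * x)) has_integral A * ((exp (L*1) - exp (L*f)) / L)) {f..1}"
    by (rule has_integral_spike_finite[where S="{f}", OF _ _ i2]) auto
  have "((\<lambda>x. if x \<le> f then A * exp (L * (1 + x)) else A * exp (L * x)) has_integral
     A * exp L * ((exp (L*f) - exp (L*0)) / L) + A * ((exp (L*1) - exp (L*f)) / L)) {0..1}"
    by (rule has_integral_combine[OF f i1' i2'])
  moreover have "A * exp L * ((exp (L*f) - exp (L*0)) / L) + A * ((exp (L*1) - exp (L*f)) / L)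
     = A * exp (L * f) * (exp L - 1) / L" using L by (simp add: field_simps exp_add[symmetric])
  ultimately show ?thesis by simp
qed



lemma exp_half_ln3:
  "\<exists>k::nat. exp (ln 3 / 2 * real d) = real (3^k) \<or> exp (ln 3 / 2 * real d) = sqrt 3 * real (3^k)"
proof -
  have e3: "exp (ln 3 / 2) = sqrt (3::real)" 
  proof -
    have "exp (ln 3 / 2) = exp (ln (sqrt (3::real)))" by (simp add: ln_sqrt)
    also have "\<dots> = sqrt 3" by (rule exp_ln) simp
    finally show ?thesis .
  qed
  have "d = 2*(d div 2) \<or> d = 2*(d div 2)+1" by presburger
  then obtain k where "d = 2*k \<or> d = 2*k+1" by blast
  then show ?thesis
  proof
    assume d: "d = 2*k"
    have "ln 3 / 2 * real d = real k * ln 3" by (simp add: d)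
    then have "exp (ln 3 / 2 * real d) = exp (real k * ln 3)" by simp
    also have "\<dots> = 3 ^ k" by (simp add: exp_of_nat_mult)
    finally show ?thesis by auto
  next
    assume d: "d = 2*k+1"
    have "ln 3 / 2 * real d = ln 3 / 2 + real k * ln 3" by (simp add: d algebra_simps)
    then have "exp (ln 3 / 2 * real d) = exp (ln 3 / 2) * exp (real k * ln 3)"
      by (simp add: exp_add[symmetric])
    also have "\<dots> = sqrt 3 * 3 ^ k" by (simp add: exp_of_nat_mult e3)
    finally show ?thesis by auto
  qed
qed


theorem lemma3p3:
  fixes n D :: nat and K0 :: real and K H :: "nat \<Rightarrow> real"
    and \<alpha> :: "nat \<Rightarrow> nat \<Rightarrow> real" and Tmin :: real and Tstar :: "nat \<Rightarrow> real"
  assumes "n \<ge> 1" and "D \<ge> 1" and "K0 > 0"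
    and "\<And>i. i < n \<Longrightarrow> K i > 0" and "\<And>i. i < n \<Longrightarrow> H i > 0"
    and "\<And>i d. i < n \<Longrightarrow> d < D \<Longrightarrow> \<alpha> i d \<ge> 0"
    and opt: "P_optimal n D K0 K H \<alpha> Tmin Tstar"
  shows "(AE \<theta> in uniform_measure lborel {0..1::real}.
            resource_feasible n D \<alpha> (\<lambda>i. round_up 3 2 \<theta> Tmin (Tstar i)))
       \<and> (\<integral>\<^sup>+ \<theta>. e2ennreal (Fcost n K0 K H (\<lambda>i. round_up 3 2 \<theta> Tmin (Tstar i)))
              \<partial>uniform_measure lborel {0..1::real})
         \<le> ennreal (2 * (sqrt 3 - 1) / ln 3 * OPT_P n D K0 K H \<alpha>)"
proof -
  define L :: real where "L = ln 3 / 2"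
  have L0: "L > 0" by (simp add: L_def)
  have expL: "exp L = sqrt 3"
  proof -
    have "exp L = exp (ln (sqrt (3::real)))" by (simp add: ln_sqrt L_def)
    also have "\<dots> = sqrt 3" by (rule exp_ln) simp
    finally show ?thesis .
  qed
  have expmL: "exp (-L) = 1 / sqrt 3" by (simp add: exp_minus expL inverse_eq_divide)
  have s3: "sqrt 3 * sqrt 3 = (3::real)" by simp
  have s3gt: "sqrt 3 > (1::real)" by simp
  have Lle: "L \<le> sqrt 3 - 1"
  proof -
    have "L = ln (sqrt 3)" by (simp add: ln_sqrt L_def)
    also have "\<dots> \<le> sqrt 3 - 1" by (rule ln_le_minus_one) simp
    finally show ?thesis .
  qed
  have s53: "5/3 \<le> sqrt (3::real)" by (rule real_le_rsqrt) (simp add: power2_eq_square)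
  have coef: "2 * (sqrt 3 - 1) / ln 3 = (sqrt 3 - 1) / L" by (simp add: L_def)
  define \<gamma> where "\<gamma> = (sqrt 3 - 1) / L"
  have coef1: "1 \<le> \<gamma>" using Lle L0 by (simp add: \<gamma>_def)

  from opt have feas: "P_feasible n D \<alpha> Tmin Tstar"
    and optim: "\<And>Tmin' T'. P_feasible n D \<alpha> Tmin' T' \<Longrightarrow> P_obj n K0 K H Tmin Tstar \<le> P_obj n K0 K H Tmin' T'"
    unfolding P_optimal_def by auto
  then have Tm0: "Tmin > 0" and TsT: "\<And>i. i<n \<Longrightarrow> Tmin \<le> Tstar i" and rf: "resource_feasible n D \<alpha> Tstar"
    unfolding P_feasible_def by auto
  have Ts0: "\<And>i. i<n \<Longrightarrow> Tstar i > 0" using Tm0 TsT by (meson less_le_trans)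
  have OPT: "OPT_P n D K0 K H \<alpha> = P_obj n K0 K H Tmin Tstar"
    unfolding OPT_P_def by (rule cInf_eq_minimum) (use feas optim in auto)

  define c where "c i = ln (Tstar i / Tmin) / L" for i
  have c0: "c i \<ge> 0" if "i < n" for i
    unfolding c_def using L0 Tm0 TsT[OF that] by (intro divide_nonneg_pos ln_ge_zero) (auto simp: field_simps)
  have Tsc: "Tstar i = exp (L * c i) * Tmin" if "i < n" for i
    using L0 Tm0 Ts0[OF that] by (simp add: c_def)
  define RT where "RT \<theta> i = round_up 3 2 \<theta> Tmin (Tstar i)" for \<theta> i
  have RTeq: "RT \<theta> i = exp (L * (of_int (\<lfloor>c i - \<theta>\<rfloor> + 1) + \<theta>)) * Tmin" if "i < n" for \<theta> i
    unfolding RT_def c_def L_def by (rule round_up_eq) (use Tm0 Ts0[OF that] in auto)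
  have RTgt: "RT \<theta> i > Tstar i" if i: "i < n" for \<theta> i
  proof -
    have "c i < of_int (\<lfloor>c i - \<theta>\<rfloor> + 1) + \<theta>" by linarith
    then have "L * c i < L * (of_int (\<lfloor>c i - \<theta>\<rfloor> + 1) + \<theta>)" using L0 by simp
    then have "exp (L * c i) * Tmin < exp (L * (of_int (\<lfloor>c i - \<theta>\<rfloor> + 1) + \<theta>)) * Tmin"
      using Tm0 by simp
    then show ?thesis using RTeq[OF i] Tsc[OF i] by simp
  qed

  have feasall: "resource_feasible n D \<alpha> (RT \<theta>)" for \<theta>
    unfolding resource_feasible_def
  proof (intro allI impI)
    fix d assume d: "d < D"
    have "(\<Sum>i<n. \<alpha> i d / RT \<theta> i) \<le> (\<Sum>i<n. \<alpha> i d / Tstar i)"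
    proof (rule sum_mono)
      fix i assume "i \<in> {..<n}"
      then have i: "i < n" by simp
      show "\<alpha> i d / RT \<theta> i \<le> \<alpha> i d / Tstar i"
        using RTgt[OF i, of \<theta>] Ts0[OF i] assms(6)[OF i d]
        by (intro divide_left_mono) (auto intro: mult_pos_pos)
    qed
    also have "\<dots> \<le> 1" using rf d unfolding resource_feasible_def by auto
    finally show "(\<Sum>i<n. \<alpha> i d / RT \<theta> i) \<le> 1" .
  qed

  have Jb: "Jcost n K0 (RT \<theta>) \<le> ereal (K0 * (1 + 1/sqrt 3) / Tmin * exp (-L*\<theta>))" if \<theta>: "\<theta> \<in> {0..1}" for \<theta>
  proof -
    define q where "q = \<lfloor>- \<theta>\<rfloor> + 1"
    have "-1 \<le> \<lfloor>- \<theta>\<rfloor>" by (subst le_floor_iff) (use \<theta> in auto)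
    then have q0: "q \<ge> 0" unfolding q_def by simp
    define r where "r = exp (L * (of_int q + \<theta>)) * Tmin"
    have r0: "r > 0" using Tm0 by (simp add: r_def)
    have "L * \<theta> \<le> L * (of_int q + \<theta>)" using q0 L0 by simp
    then have rge: "exp (L * \<theta>) * Tmin \<le> r" using Tm0 unfolding r_def by simp
    have forms: "(\<exists>N::nat. N > 0 \<and> RT \<theta> i = r * real N) \<or> (\<exists>N::nat. N > 0 \<and> RT \<theta> i = (r * sqrt 3) * real N)"
      if i: "i < n" for i
    proof -
      have "\<lfloor>- \<theta>\<rfloor> \<le> \<lfloor>c i - \<theta>\<rfloor>" using c0[OF i] by (intro floor_mono) simp
      then have "q \<le> \<lfloor>c i - \<theta>\<rfloor> + 1" unfolding q_def by simp
      then obtain d :: nat where d: "\<lfloor>c i - \<theta>\<rfloor> + 1 = q + int d" by (metis zle_iff_zadd)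
      have "L * (of_int (\<lfloor>c i - \<theta>\<rfloor> + 1) + \<theta>) = L * (of_int q + \<theta>) + L * real d"
        unfolding d by (simp add: algebra_simps)
      then have RTd: "RT \<theta> i = r * exp (L * real d)"
        using RTeq[OF i] by (simp add: r_def exp_add)
      obtain k :: nat where "exp (L * real d) = real (3^k) \<or> exp (L * real d) = sqrt 3 * real (3^k)"
        using exp_half_ln3[of d] unfolding L_def by blast
      then show ?thesis
      proof
        assume "exp (L * real d) = real (3^k)"
        then show ?thesis using RTd by (intro disjI1 exI[of _ "3^k"]) simp
      next
        assume "exp (L * real d) = sqrt 3 * real (3^k)"
        then show ?thesis using RTd by (intro disjI2 exI[of _ "3^k"]) simp
      qed
    qed
    have "Jcost n K0 (RT \<theta>) \<le> ereal (K0 * (1/r + 1/(r * sqrt 3)))"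
      by (rule J_bound) (use assms(3) r0 forms in auto)
    also have "K0 * (1/r + 1/(r * sqrt 3)) = K0 * (1 + 1/sqrt 3) / r" using r0 by (simp add: field_simps)
    also have "\<dots> \<le> K0 * (1 + 1/sqrt 3) / (exp (L * \<theta>) * Tmin)"
      using rge assms(3) Tm0 r0 by (intro divide_left_mono) (auto intro!: mult_pos_pos)
    also have "\<dots> = K0 * (1 + 1/sqrt 3) / Tmin * exp (-L*\<theta>)" by (simp add: exp_minus field_simps)
    finally show ?thesis by simp
  qed

  define m where "m i = \<lfloor>c i\<rfloor>" for i
  define f where "f i = c i - of_int (m i)" for i
  define A where "A i = exp (L * of_int (m i)) * Tmin" for i
  define B where "B i x = (if x \<le> f i then A i * exp (L * (1 + x)) else A i * exp (L * x))" for i x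
  have f01: "0 \<le> f i" "f i \<le> 1" for i unfolding f_def m_def by linarith+
  have RTB: "RT \<theta> i = B i \<theta>" if i: "i < n" and \<theta>: "\<theta> \<in> {0..1}" for i \<theta>
  proof (cases "\<theta> \<le> f i")
    case True
    have "\<lfloor>c i - \<theta>\<rfloor> = m i" unfolding floor_eq_iff using True \<theta> unfolding f_def m_def by auto linarith+
    then have "L * (of_int (\<lfloor>c i - \<theta>\<rfloor> + 1) + \<theta>) = L * of_int (m i) + L * (1 + \<theta>)" by (simp add: algebra_simps)
    then show ?thesis using True RTeq[OF i, of \<theta>] by (simp add: B_def A_def exp_add)
  next
    case False
    have "\<lfloor>c i - \<theta>\<rfloor> = m i - 1" unfolding floor_eq_iff using False \<theta> unfolding f_def m_def by auto linarith+
    then have "L * (of_int (\<lfloor>c i - \<theta>\<rfloor> + 1) + \<theta>) = L * of_int (m i) + L * \<theta>" by (simp add: algebra_simps)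
    then show ?thesis using False RTeq[OF i, of \<theta>] by (simp add: B_def A_def exp_add)
  qed
  have Af: "A i * exp (L * f i) = Tstar i" if i: "i < n" for i
  proof -
    have "A i * exp (L * f i) = exp (L * of_int (m i) + L * f i) * Tmin" by (simp add: A_def exp_add)
    also have "L * of_int (m i) + L * f i = L * c i" by (simp add: f_def algebra_simps)
    finally show ?thesis using Tsc[OF i] by simp
  qed

  define G where "G x = K0 * (1 + 1/sqrt 3) / Tmin * exp (-L*x) + (\<Sum>i<n. K i / Tstar i + H i * B i x)" for x
  have Fb: "e2ennreal (Fcost n K0 K H (RT \<theta>)) \<le> ennreal (G \<theta>)" if \<theta>: "\<theta> \<in> {0..1}" for \<theta>
  proof -
    have S: "(\<Sum>i<n. K i / RT \<theta> i + H i * RT \<theta> i) \<le> (\<Sum>i<n. K i / Tstar i + H i * B i \<theta>)"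
    proof (rule sum_mono)
      fix i assume "i \<in> {..<n}"
      then have i: "i < n" by simp
      have "K i / RT \<theta> i \<le> K i / Tstar i"
        using RTgt[OF i, of \<theta>] Ts0[OF i] assms(4)[OF i]
        by (intro divide_left_mono) (auto intro: mult_pos_pos)
      then show "K i / RT \<theta> i + H i * RT \<theta> i \<le> K i / Tstar i + H i * B i \<theta>"
        using RTB[OF i \<theta>] by simp
    qed
    have "Fcost n K0 K H (RT \<theta>) \<le> ereal (K0 * (1 + 1/sqrt 3) / Tmin * exp (-L*\<theta>)) + ereal (\<Sum>i<n. K i / Tstar i + H i * B i \<theta>)"
      unfolding Fcost_def by (rule add_mono) (use Jb[OF \<theta>] S in auto)
    also have "\<dots> = ereal (G \<theta>)" by (simp add: G_def)
    finally show ?thesis using e2ennreal_mono by fastforce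
  qed

  define V where "V = K0 * (1 + 1/sqrt 3) / Tmin * ((exp (-L*1) - exp (-L*0)) / (-L))
      + (\<Sum>i<n. K i / Tstar i + H i * (A i * exp (L * f i) * (exp L - 1) / L))"
  have Gint: "(G has_integral V) {0..1}"
    unfolding G_def V_def
  proof (intro has_integral_add has_integral_mult_right has_integral_sum)
    show "((\<lambda>x. exp (- L * x)) has_integral (exp (- L * 1) - exp (- L * 0)) / - L) {0..1}"
      by (rule exp_has_integral) (use L0 in auto)
  next
    fix i show "((\<lambda>x. K i / Tstar i) has_integral K i / Tstar i) {0..1::real}"
      using has_integral_const_real[of "K i / Tstar i" 0 1] by simp
  next
    fix i show "((\<lambda>x. B i x) has_integral A i * exp (L * f i) * (exp L - 1) / L) {0..1}"
      unfolding B_def by (rule piece_has_integral) (use L0 f01 in auto)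
  qed simp
  have Gnn: "G x \<ge> 0" for x
  proof -
    have "0 \<le> K0 * (1 + 1/sqrt 3) / Tmin * exp (-L*x)" using assms(3) Tm0 by simp
    moreover have "0 \<le> (\<Sum>i<n. K i / Tstar i + H i * B i x)"
    proof (rule sum_nonneg)
      fix i assume "i \<in> {..<n}"
      then have i: "i < n" by simp
      have "0 \<le> B i x" using Tm0 by (simp add: B_def A_def)
      then show "0 \<le> K i / Tstar i + H i * B i x"
        using assms(4)[OF i] assms(5)[OF i] Ts0[OF i] by simp
    qed
    ultimately show ?thesis unfolding G_def by simp
  qed
  have Gmeas: "(\<lambda>x. ennreal (G x)) \<in> borel_measurable lborel"
    unfolding G_def B_def by measurable

  have Vle: "V \<le> \<gamma> * P_obj n K0 K H Tmin Tstar"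
  proof -
    have e1: "(1 + 1/sqrt 3) * ((exp (-L*1) - exp (-L*0)) / (-L)) = (2/3) / L"
    proof -
      have "exp (-L*1) = 1 / sqrt 3" using expmL by simp
      then have "(1 + 1/sqrt 3) * ((exp (-L*1) - exp (-L*0)) / (-L)) = (1 + 1/sqrt 3) * ((1 / sqrt 3 - 1) / (-L))" by simp
      also have "\<dots> = (1 - 1 / (sqrt 3 * sqrt 3)) / L" using L0 by (simp add: field_simps)
      also have "\<dots> = (2/3) / L" by (simp only: s3) simp
      finally show ?thesis .
    qed
    have t1: "K0 * (1 + 1/sqrt 3) / Tmin * ((exp (-L*1) - exp (-L*0)) / (-L)) \<le> \<gamma> * (K0 / Tmin)"
    proof -
      have "K0 * (1 + 1/sqrt 3) / Tmin * ((exp (-L*1) - exp (-L*0)) / (-L)) = (K0 / Tmin) * ((2/3) / L)"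
      proof -
        have g: "K0 * X / Tmin * Y = K0 / Tmin * (X * Y)" for X Y :: real by simp
        show ?thesis by (simp only: g e1)
      qed
      also have "\<dots> \<le> (K0 / Tmin) * \<gamma>"
        using s53 L0 assms(3) Tm0 unfolding \<gamma>_def by (intro mult_left_mono divide_right_mono) auto
      finally show ?thesis by (simp add: mult.commute)
    qed
    have t2: "(\<Sum>i<n. K i / Tstar i + H i * (A i * exp (L * f i) * (exp L - 1) / L))
        \<le> (\<Sum>i<n. \<gamma> * (K i / Tstar i + H i * Tstar i))"
    proof (rule sum_mono)
      fix i assume "i \<in> {..<n}"
      then have i: "i < n" by simp
      have "K i / Tstar i \<le> \<gamma> * (K i / Tstar i)"
      proof -
        have "0 \<le> K i / Tstar i" using assms(4)[OF i] Ts0[OF i] by simp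
        then have "1 * (K i / Tstar i) \<le> \<gamma> * (K i / Tstar i)" using coef1 by (intro mult_right_mono)
        then show ?thesis by simp
      qed
      moreover have "H i * (A i * exp (L * f i) * (exp L - 1) / L) = \<gamma> * (H i * Tstar i)"
        using Af[OF i] by (simp add: \<gamma>_def expL)
      ultimately show "K i / Tstar i + H i * (A i * exp (L * f i) * (exp L - 1) / L) \<le> \<gamma> * (K i / Tstar i + H i * Tstar i)"
        by (simp add: distrib_left)
    qed
    have "V \<le> \<gamma> * (K0 / Tmin) + (\<Sum>i<n. \<gamma> * (K i / Tstar i + H i * Tstar i))"
      unfolding V_def using t1 t2 by (rule add_mono)
    also have "\<dots> = \<gamma> * P_obj n K0 K H Tmin Tstar"
      by (simp add: P_obj_def distrib_left sum_distrib_left)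
    finally show ?thesis .
  qed

  have "(\<integral>\<^sup>+ \<theta>. e2ennreal (Fcost n K0 K H (RT \<theta>)) \<partial>uniform_measure lborel {0..1::real})
      \<le> (\<integral>\<^sup>+ \<theta>. ennreal (G \<theta>) \<partial>uniform_measure lborel {0..1::real})"
    by (intro nn_integral_mono_AE AE_uniform_measureI AE_I2) (auto intro: Fb)
  also have "\<dots> = (\<integral>\<^sup>+ \<theta>. ennreal (G \<theta>) * indicator {0..1} \<theta> \<partial>lborel) / emeasure lborel {0..1::real}"
    by (rule nn_integral_uniform_measure) (use Gmeas in auto)
  also have "\<dots> = ennreal V"
    using nn_integral_has_integral_lebesgue'[OF _ Gint] Gnn by (simp add: divide_ennreal_def)
  also have "\<dots> \<le> ennreal (\<gamma> * P_obj n K0 K H Tmin Tstar)" using Vle by (rule ennreal_leI)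
  also have "ennreal (\<gamma> * P_obj n K0 K H Tmin Tstar) = ennreal (2 * (sqrt 3 - 1) / ln 3 * OPT_P n D K0 K H \<alpha>)"
    by (simp only: OPT \<gamma>_def coef)
  finally have I: "(\<integral>\<^sup>+ \<theta>. e2ennreal (Fcost n K0 K H (RT \<theta>)) \<partial>uniform_measure lborel {0..1::real})
      \<le> ennreal (2 * (sqrt 3 - 1) / ln 3 * OPT_P n D K0 K H \<alpha>)" .
  have AEf: "AE \<theta> in uniform_measure lborel {0..1::real}. resource_feasible n D \<alpha> (RT \<theta>)"
    using feasall by simp
  have eqRT: "(\<lambda>i. round_up 3 2 \<theta> Tmin (Tstar i)) = RT \<theta>" for \<theta> by (simp add: RT_def fun_eq_iff)
  show ?thesis unfolding eqRT using AEf I by simp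
qed

end
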